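(* For all $N\ge1$ and $1\le k\le N$, $E\big[(X_{k,N}-Y_{k,N})^2\big]\le 3/N$.
   Context: Fix $r\in(0,1)$. Multitype Yule process: at time $0$ a single individual of type $1$ is born; no deaths; each individual independently gives birth at rate $1$; a newborn has, independently, its parent's type with probability $1-r$ and otherwise a brand-new type. Individuals are numbered in order of birth (the initial one is the 1st); if the $k$-th individual born has a type different from its parent, that type is called type $k$. $T_N$ is the time the population reaches size $N$; $X_{k,N}$ is the fraction of individuals at time $T_N$ with type in $\{1,\dots,k\}$; $V_{k,N}$ is the fraction, among individuals at time $T_N$ with type in $\{1,\dots,k\}$, of those that have type $k$. $W_k=\lim_{N\to\infty}V_{k,N}$ (exists a.s.); the $W_k$ are independent, $W_1=1$, and for $k\ge2$, $P(W_k>0)=r$ and given $W_k>0$, $W_k\sim\mathrm{Beta}(1,k-1)$. $Y_{N,N}=1$ and $Y_{k,N}=\prod_{j=k+1}^N(1-W_j)$ for $1\le k\le N-1$. *)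

theory Defs
  imports "HOL-Probability.Probability"
begin

text \<open>Embedded jump chain of the multitype Yule process.  A sample point
  \<open>\<omega> :: nat \<Rightarrow> nat \<times> bool\<close> records, for each \<open>n\<close>, the data of individual
  number \<open>n + 2\<close>: \<open>fst (\<omega> n)\<close> is its parent (uniform among individuals
  \<open>1..n+1\<close>, since every living individual gives birth at rate 1), and
  \<open>snd (\<omega> n)\<close> says whether it receives a brand-new type (probability r).\<close>

definition yule_space :: "real \<Rightarrow> (nat \<Rightarrow> nat \<times> bool) measure" where
  "yule_space r = (\<Pi>\<^sub>M n\<in>UNIV. measure_pmf (pair_pmf (pmf_of_set {1..Suc n}) (bernoulli_pmf r)))"

text \<open>\<open>typs \<omega> n i\<close> = type of individual \<open>i\<close> (for \<open>1 \<le> i \<le> n+1\<close>).\<close>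
primrec typs :: "(nat \<Rightarrow> nat \<times> bool) \<Rightarrow> nat \<Rightarrow> nat \<Rightarrow> nat" where
  "typs \<omega> 0 = (\<lambda>i. 1)"
| "typs \<omega> (Suc n) = (typs \<omega> n)(n + 2 := (if snd (\<omega> n) then n + 2 else typs \<omega> n (fst (\<omega> n))))"

definition yule_type :: "(nat \<Rightarrow> nat \<times> bool) \<Rightarrow> nat \<Rightarrow> nat" where
  "yule_type \<omega> i = typs \<omega> i i"

definition Xf :: "nat \<Rightarrow> nat \<Rightarrow> (nat \<Rightarrow> nat \<times> bool) \<Rightarrow> real" where
  "Xf k N \<omega> = real (card {i \<in> {1..N}. yule_type \<omega> i \<in> {1..k}}) / real N"

definition Vf :: "nat \<Rightarrow> nat \<Rightarrow> (nat \<Rightarrow> nat \<times> bool) \<Rightarrow> real" where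
  "Vf k N \<omega> = real (card {i \<in> {1..N}. yule_type \<omega> i = k})
                / real (card {i \<in> {1..N}. yule_type \<omega> i \<in> {1..k}})"

definition Wf :: "nat \<Rightarrow> (nat \<Rightarrow> nat \<times> bool) \<Rightarrow> real" where
  "Wf k \<omega> = lim (\<lambda>N. Vf k N \<omega>)"

definition Yf :: "nat \<Rightarrow> nat \<Rightarrow> (nat \<Rightarrow> nat \<times> bool) \<Rightarrow> real" where
  "Yf k N \<omega> = (\<Prod>j\<in>{k+1..N}. 1 - Wf j \<omega>)"

end

theory Submission
  imports Defs
begin



definition dep :: "nat \<Rightarrow> ((nat \<Rightarrow> 'a) \<Rightarrow> 'b) \<Rightarrow> bool" where
  "dep n f \<longleftrightarrow> (\<forall>w w'. (\<forall>i<n. w i = w' i) \<longrightarrow> f w = f w')"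

lemma depD: "dep n f \<Longrightarrow> (\<And>i. i < n \<Longrightarrow> w i = w' i) \<Longrightarrow> f w = f w'"
  unfolding dep_def by blast

lemma depI: "(\<And>w w'. (\<And>i. i < n \<Longrightarrow> w i = w' i) \<Longrightarrow> f w = f w') \<Longrightarrow> dep n f"
  unfolding dep_def by blast

lemma dep_mono: "dep n f \<Longrightarrow> n \<le> m \<Longrightarrow> dep m f"
  unfolding dep_def by auto

lemma dep_measurable_count:
  fixes P :: "nat \<Rightarrow> ('a::countable) pmf" and f :: "(nat \<Rightarrow> 'a) \<Rightarrow> 'b"
  assumes "dep n f" "{..<n} \<subseteq> I"
  shows "f \<in> measurable (PiM I (\<lambda>i. measure_pmf (P i))) (count_space UNIV)"
  using assms
proof (induction n arbitrary: f)
  case 0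
  then have "f = (\<lambda>_. f undefined)" by (auto simp: dep_def)
  then show ?case by (metis measurable_count_space_const)
next
  case (Suc n)
  have eq: "f = (\<lambda>w. (\<lambda>y w. f (w(n := y))) (w n) w)" by simp
  have "(\<lambda>w. f (w(n := y))) \<in> measurable (PiM I (\<lambda>i. measure_pmf (P i))) (count_space UNIV)" for y
    apply (rule Suc.IH)
    using Suc.prems by (auto simp: dep_def)
  moreover have "(\<lambda>w. w n) \<in> measurable (PiM I (\<lambda>i. measure_pmf (P i))) (count_space UNIV)"
  proof -
    have "n \<in> I" using Suc.prems by auto
    then have "(\<lambda>w. w n) \<in> measurable (PiM I (\<lambda>i. measure_pmf (P i))) (measure_pmf (P n))"
      by (rule measurable_component_singleton)
    moreover have "(\<lambda>x. x) \<in> measurable (measure_pmf (P n)) (count_space UNIV)" by simp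
    ultimately show ?thesis using measurable_compose by blast
  qed
  ultimately show ?case
    by (subst eq, rule measurable_compose_countable)
qed

lemma dep_measurable:
  fixes P :: "nat \<Rightarrow> ('a::countable) pmf" and f :: "(nat \<Rightarrow> 'a) \<Rightarrow> real"
  assumes "dep n f" "{..<n} \<subseteq> I"
  shows "f \<in> borel_measurable (PiM I (\<lambda>i. measure_pmf (P i)))"
proof -
  have "(\<lambda>x. x) \<in> measurable (count_space UNIV) (borel :: real measure)" by simp
  then show ?thesis using dep_measurable_count[OF assms, of P] measurable_compose by blast
qed

lemma prob_PiM: "prob_space (PiM I (\<lambda>i. measure_pmf (P i)))"
  by (intro prob_space_PiM prob_space_measure_pmf)




lemma upd_meas:
  fixes P :: "nat \<Rightarrow> ('a::countable) pmf"
  shows "(\<lambda>(x, X). X(m := x)) \<in> measurable (measure_pmf (P m) \<Otimes>\<^sub>M PiM (UNIV - {m}) (\<lambda>i. measure_pmf (P i))) (PiM UNIV (\<lambda>i. measure_pmf (P i)))"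
proof -
  have "(\<lambda>(x, X). X(m := x)) \<in> measurable (measure_pmf (P m) \<Otimes>\<^sub>M PiM (UNIV - {m}) (\<lambda>i. measure_pmf (P i))) (PiM (insert m (UNIV - {m})) (\<lambda>i. measure_pmf (P i)))"
    by measurable
  moreover have "insert m (UNIV - {m}) = (UNIV :: nat set)" by auto
  ultimately show ?thesis by simp
qed

lemma split_int:
  fixes P :: "nat \<Rightarrow> ('a::countable) pmf" and u :: "(nat \<Rightarrow> 'a) \<Rightarrow> real"
  assumes u: "u \<in> borel_measurable (PiM UNIV (\<lambda>i. measure_pmf (P i)))" and B: "\<And>w. \<bar>u w\<bar> \<le> B"
  shows "(\<integral>w. u w \<partial>PiM UNIV (\<lambda>i. measure_pmf (P i))) =
         (\<integral>X. (\<integral>x. u (X(m := x)) \<partial>measure_pmf (P m)) \<partial>PiM (UNIV - {m}) (\<lambda>i. measure_pmf (P i)))"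
proof -
  let ?M = "\<lambda>i. measure_pmf (P i)"
  let ?MI = "PiM (UNIV - {m}) ?M"
  interpret MI: prob_space ?MI by (rule prob_PiM)
  interpret PP: pair_prob_space "?M m" ?MI
    by (simp add: MI.prob_space_axioms pair_prob_space.intro pair_sigma_finite.intro prob_space_imp_sigma_finite prob_space_measure_pmf)
  have d: "distr (?M m \<Otimes>\<^sub>M ?MI) (PiM (insert m (UNIV - {m})) ?M) (\<lambda>(x, X). X(m := x)) = PiM (insert m (UNIV - {m})) ?M"
    by (rule distr_pair_PiM_eq_PiM) (auto intro: prob_space_measure_pmf)
  have ins: "insert m (UNIV - {m}) = (UNIV :: nat set)" by auto
  have d': "PiM UNIV ?M = distr (?M m \<Otimes>\<^sub>M ?MI) (PiM UNIV ?M) (\<lambda>(x, X). X(m := x))"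
    using d unfolding ins by simp
  have "(\<integral>w. u w \<partial>PiM UNIV ?M) = (\<integral>w. u w \<partial>distr (?M m \<Otimes>\<^sub>M ?MI) (PiM UNIV ?M) (\<lambda>(x, X). X(m := x)))"
    using d' by simp
  also have "\<dots> = (\<integral>z. u (case z of (x, X) \<Rightarrow> X(m := x)) \<partial>(?M m \<Otimes>\<^sub>M ?MI))"
    by (rule integral_distr[OF upd_meas u])
  also have "\<dots> = (\<integral>z. (case z of (x, X) \<Rightarrow> u (X(m := x))) \<partial>(?M m \<Otimes>\<^sub>M ?MI))"
    by (simp add: case_prod_beta)
  also have "\<dots> = (\<integral>X. (\<integral>x. u (X(m := x)) \<partial>?M m) \<partial>?MI)"
  proof (rule PP.integral_snd[symmetric, where f="\<lambda>x X. u (X(m := x))"])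
    have me: "(\<lambda>z. u (case z of (x, X) \<Rightarrow> X(m := x))) \<in> borel_measurable (?M m \<Otimes>\<^sub>M ?MI)"
      using measurable_compose[OF upd_meas u] by simp
    show "integrable (?M m \<Otimes>\<^sub>M ?MI) (\<lambda>(x, X). u (X(m := x)))"
      apply (rule PP.P.integrable_const_bound[where B=B])
      using B me by (auto simp: case_prod_beta)
  qed
  finally show ?thesis .
qed




lemma dep_comb2: "dep n f \<Longrightarrow> dep n g \<Longrightarrow> dep n (\<lambda>w. F (f w) (g w))"
  unfolding dep_def by metis

lemma dep_comb1: "dep n f \<Longrightarrow> dep n (\<lambda>w. F (f w))"
  unfolding dep_def by metis

lemma dep_const: "dep n (\<lambda>w. c)"
  unfolding dep_def by simp

lemma dep_integrable:
  fixes P :: "nat \<Rightarrow> ('a::countable) pmf" and f :: "(nat \<Rightarrow> 'a) \<Rightarrow> real"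
  assumes "dep n f" "\<And>w. \<bar>f w\<bar> \<le> B"
  shows "integrable (PiM UNIV (\<lambda>i. measure_pmf (P i))) f"
proof -
  interpret prob_space "PiM UNIV (\<lambda>i. measure_pmf (P i))" by (rule prob_PiM)
  show ?thesis
    by (rule integrable_const_bound[where B=B]) (use assms dep_measurable[OF assms(1), of UNIV P] in auto)
qed

lemma pmf_integrable_bound:
  fixes f :: "'a \<Rightarrow> real"
  assumes "\<And>x. \<bar>f x\<bar> \<le> B"
  shows "integrable (measure_pmf p) f"
  by (rule measure_pmf.integrable_const_bound[where B=B]) (use assms in auto)

lemma cond_zero:
  fixes P :: "nat \<Rightarrow> ('a::countable) pmf" and h :: "(nat \<Rightarrow> 'a) \<Rightarrow> real"
  assumes "dep (Suc m) h" "\<And>w. \<bar>h w\<bar> \<le> B" "\<And>w. (\<integral>x. h (w(m := x)) \<partial>measure_pmf (P m)) = 0"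
  shows "(\<integral>w. h w \<partial>PiM UNIV (\<lambda>i. measure_pmf (P i))) = 0"
  apply (subst split_int[where m=m and B=B])
  using assms dep_measurable[OF assms(1), of UNIV P] by auto

locale mart =
  fixes P :: "nat \<Rightarrow> ('a::countable) pmf" and S :: "nat \<Rightarrow> (nat \<Rightarrow> 'a) \<Rightarrow> real" and c :: nat and B :: real
  assumes dS: "\<And>n. dep (n + c) (S n)"
    and bS: "\<And>n w. \<bar>S n w\<bar> \<le> B"
    and mS: "\<And>n w. (\<integral>x. S (Suc n) (w(n + c := x)) \<partial>measure_pmf (P (n + c))) = S n w"
begin

abbreviation "PM \<equiv> PiM UNIV (\<lambda>i. measure_pmf (P i))"

lemma B_nonneg: "0 \<le> B" using bS[of 0 undefined] by simp

lemma intS: "integrable PM (S n)" by (rule dep_integrable[OF dS bS])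

lemma orth:
  assumes "m \<le> n" "dep (m + c) g" "\<And>w. \<bar>g w\<bar> \<le> G"
  shows "(\<integral>w. (S n w - S m w) * g w \<partial>PM) = 0"
  using assms(1)
proof (induction n rule: dec_induct)
  case base
  then show ?case by simp
next
  case (step n)
  have G0: "0 \<le> G" using assms(3)[of undefined] by simp
  have bnd: "\<bar>(S a w - S b w) * g w\<bar> \<le> 2 * B * G" for a b w
  proof -
    have "\<bar>(S a w - S b w) * g w\<bar> = \<bar>S a w - S b w\<bar> * \<bar>g w\<bar>" by (simp add: abs_mult)
    also have "\<dots> \<le> (2 * B) * G"
      by (rule mult_mono) (use bS[of a w] bS[of b w] assms(3)[of w] B_nonneg in auto)
    finally show ?thesis by simp
  qed
  have dg: "dep (Suc (n + c)) g" using assms(2) step.hyps by (auto intro: dep_mono)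
  have dSn: "dep (Suc (n + c)) (S n)" by (rule dep_mono[OF dS]) auto
  have dSn1: "dep (Suc (n + c)) (S (Suc n))" using dS[of "Suc n"] by simp
  have dSm: "dep (Suc (n + c)) (S m)" by (rule dep_mono[OF dS]) (use step.hyps in auto)
  have eq: "(\<lambda>w. (S (Suc n) w - S m w) * g w) = (\<lambda>w. (S (Suc n) w - S n w) * g w + (S n w - S m w) * g w)"
    by (auto simp: algebra_simps)
  have z: "(\<integral>w. (S (Suc n) w - S n w) * g w \<partial>PM) = 0"
  proof (rule cond_zero[where m="n + c" and B="2 * B * G"])
    show "dep (Suc (n + c)) (\<lambda>w. (S (Suc n) w - S n w) * g w)"
      by (intro dep_comb2[OF dep_comb2[OF dSn1 dSn] dg])
    show "\<bar>(S (Suc n) w - S n w) * g w\<bar> \<le> 2 * B * G" for w by (rule bnd)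
    fix w
    have gw: "g (w(n + c := x)) = g w" for x by (rule depD[OF assms(2)]) (use step.hyps in auto)
    have Sw: "S n (w(n + c := x)) = S n w" for x by (rule depD[OF dS]) auto
    have "(\<integral>x. (S (Suc n) (w(n + c := x)) - S n (w(n + c := x))) * g (w(n + c := x)) \<partial>measure_pmf (P (n + c)))
        = (\<integral>x. S (Suc n) (w(n + c := x)) * g w - S n w * g w \<partial>measure_pmf (P (n + c)))"
      unfolding gw Sw by (simp add: algebra_simps)
    also have "\<dots> = (\<integral>x. S (Suc n) (w(n + c := x)) \<partial>measure_pmf (P (n + c))) * g w - S n w * g w"
    proof -
      have i1: "integrable (measure_pmf (P (n + c))) (\<lambda>x. S (Suc n) (w(n + c := x)) * g w)"
        by (rule integrable_mult_left, rule pmf_integrable_bound[where B=B], rule bS)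
      show ?thesis by (simp add: Bochner_Integration.integral_diff[OF i1])
    qed
    also have "\<dots> = 0" by (simp add: mS)
    finally show "(\<integral>x. (S (Suc n) (w(n + c := x)) - S n (w(n + c := x))) * g (w(n + c := x)) \<partial>measure_pmf (P (n + c))) = 0" .
  qed
  have "(\<integral>w. (S (Suc n) w - S m w) * g w \<partial>PM) = (\<integral>w. (S (Suc n) w - S n w) * g w \<partial>PM) + (\<integral>w. (S n w - S m w) * g w \<partial>PM)"
    unfolding eq
    apply (rule Bochner_Integration.integral_add)
     apply (rule dep_integrable[where B="2*B*G" and n="Suc (n + c)"])
      apply (intro dep_comb2[OF dep_comb2[OF dSn1 dSn] dg])
     apply (rule bnd)
    apply (rule dep_integrable[where B="2*B*G" and n="Suc (n + c)"])
     apply (intro dep_comb2[OF dep_comb2[OF dSn dSm] dg])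
    apply (rule bnd)
    done
  then show ?case using z step.IH by simp
qed

lemma sq_diff:
  assumes "m \<le> n"
  shows "(\<integral>w. (S n w - S m w)\<^sup>2 \<partial>PM) = (\<integral>w. (S n w)\<^sup>2 \<partial>PM) - (\<integral>w. (S m w)\<^sup>2 \<partial>PM)"
proof -
  have o: "(\<integral>w. (S n w - S m w) * S m w \<partial>PM) = 0"
    by (rule orth[OF assms dS bS])
  have eq: "(\<lambda>w. (S n w - S m w)\<^sup>2) = (\<lambda>w. ((S n w)\<^sup>2 - (S m w)\<^sup>2) - 2 * ((S n w - S m w) * S m w))"
    by (auto simp: power2_eq_square algebra_simps)
  have sqb: "\<bar>(S k w)\<^sup>2\<bar> \<le> B * B" for k w
    using bS[of k w] B_nonneg by (simp add: power2_eq_square abs_mult) (metis abs_ge_zero abs_mult_self_eq mult_mono)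
  have i1: "integrable PM (\<lambda>w. (S k w)\<^sup>2)" for k
    by (rule dep_integrable[where B="B*B"], rule dep_comb1[OF dS], rule sqb)
  have i2: "integrable PM (\<lambda>w. (S n w - S m w) * S m w)"
  proof (rule dep_integrable[where B="2*B*B"])
    show "dep (n + m + c) (\<lambda>w. (S n w - S m w) * S m w)"
      by (rule dep_comb2[OF dep_comb2[OF dep_mono[OF dS] dep_mono[OF dS]] dep_mono[OF dS]]) auto
    show "\<bar>(S n w - S m w) * S m w\<bar> \<le> 2 * B * B" for w
    proof -
      have "\<bar>(S n w - S m w) * S m w\<bar> = \<bar>S n w - S m w\<bar> * \<bar>S m w\<bar>" by (simp add: abs_mult)
      also have "\<dots> \<le> (2 * B) * B"
        by (rule mult_mono) (use bS[of n w] bS[of m w] B_nonneg in auto)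
      finally show ?thesis by simp
    qed
  qed
  show ?thesis
    unfolding eq
    apply (subst Bochner_Integration.integral_diff)
      apply (rule Bochner_Integration.integrable_diff[OF i1 i1])
     apply (rule integrable_mult_right[OF i2])
    apply (subst Bochner_Integration.integral_diff[OF i1 i1])
    using o by simp
qed

end



lemma first_sum:
  fixes A :: "nat \<Rightarrow> bool"
  shows "(\<Sum>l\<in>{m..n}. of_bool (A l \<and> (\<forall>l'\<in>{m..<l}. \<not> A l')) :: real) = of_bool (\<exists>l\<in>{m..n}. A l)"
proof (induction n)
  case 0
  then show ?case by (cases m) auto
next
  case (Suc n)
  show ?case
  proof (cases "m \<le> Suc n")
    case True
    have ins: "{m..Suc n} = insert (Suc n) {m..n}" using True by auto
    have lt: "{m..<Suc n} = {m..n}" by auto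
    show ?thesis
      unfolding ins using Suc.IH
      by (subst sum.insert) (auto simp: lt le_Suc_eq)
  next
    case False
    then show ?thesis by auto
  qed
qed

lemma space_PM: "space (PiM UNIV (\<lambda>i. measure_pmf (P i))) = UNIV"
  by (auto simp: space_PiM)

lemma of_bool_mult_abs: "\<bar>of_bool b * (x::real)\<bar> \<le> \<bar>x\<bar>" by auto

context mart begin

lemma S_meas[measurable]: "S n \<in> borel_measurable PM"
  by (rule dep_measurable[OF dS]) auto

lemma sqb2: "\<bar>(S a w - S b w)\<^sup>2\<bar> \<le> 4 * B\<^sup>2"
proof -
  have "\<bar>S a w - S b w\<bar> \<le> 2 * B" using bS[of a w] bS[of b w] by auto
  then have "\<bar>S a w - S b w\<bar>\<^sup>2 \<le> (2 * B)\<^sup>2" by (rule power_mono) simp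
  then show ?thesis by (simp add: power2_eq_square)
qed

lemma kolmo:
  assumes "m \<le> n" "0 < \<epsilon>"
  shows "\<epsilon>\<^sup>2 * measure PM {w. \<exists>l\<in>{m..n}. \<epsilon> \<le> \<bar>S l w - S m w\<bar>} \<le> (\<integral>w. (S n w - S m w)\<^sup>2 \<partial>PM)"
proof -
  define Bl where "Bl l w \<longleftrightarrow> \<epsilon> \<le> \<bar>S l w - S m w\<bar> \<and> (\<forall>l'\<in>{m..<l}. \<not> \<epsilon> \<le> \<bar>S l' w - S m w\<bar>)" for l w
  define E where "E w \<longleftrightarrow> (\<exists>l\<in>{m..n}. \<epsilon> \<le> \<bar>S l w - S m w\<bar>)" for w
  have dBl: "dep (l + c) (\<lambda>w. of_bool (Bl l w) :: real)" if "m \<le> l" for l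
  proof (rule depI)
    fix w w' :: "nat \<Rightarrow> 'a" assume a: "\<And>i. i < l + c \<Longrightarrow> w i = w' i"
    have "S l' w = S l' w'" if "l' \<le> l" for l'
      by (rule depD[OF dep_mono[OF dS]]) (use a that in auto)
    then show "of_bool (Bl l w) = (of_bool (Bl l w') :: real)"
      unfolding Bl_def using that by auto
  qed
  have dE: "dep (n + c) (\<lambda>w. of_bool (E w) :: real)"
  proof (rule depI)
    fix w w' :: "nat \<Rightarrow> 'a" assume a: "\<And>i. i < n + c \<Longrightarrow> w i = w' i"
    have "S l' w = S l' w'" if "l' \<le> n" for l'
      by (rule depD[OF dep_mono[OF dS]]) (use a that in auto)
    then show "of_bool (E w) = (of_bool (E w') :: real)"
      unfolding E_def using assms by auto
  qed
  have dsq: "dep (n + c) (\<lambda>w. (S n w - S m w)\<^sup>2)"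
    by (rule dep_comb2[OF dS dep_mono[OF dS]]) (use assms in auto)
  have sumB: "(\<Sum>l\<in>{m..n}. of_bool (Bl l w) :: real) = of_bool (E w)" for w
    unfolding Bl_def E_def by (rule first_sum)
  have intBl: "integrable PM (\<lambda>w. of_bool (Bl l w) :: real)" if "l \<in> {m..n}" for l
    by (rule dep_integrable[OF dBl, where B=1]) (use that in auto)
  have intBlsq: "integrable PM (\<lambda>w. of_bool (Bl l w) * (S n w - S m w)\<^sup>2)" if "l \<in> {m..n}" for l
    apply (rule dep_integrable[where B="4*B\<^sup>2" and n="n + c"])
     apply (rule dep_comb2[OF dep_mono[OF dBl] dsq]) using that apply auto[2]
    by (rule order_trans[OF of_bool_mult_abs sqb2])
  have ineq: "\<epsilon>\<^sup>2 * (\<integral>w. of_bool (Bl l w) \<partial>PM) \<le> (\<integral>w. of_bool (Bl l w) * (S n w - S m w)\<^sup>2 \<partial>PM)"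
    if l: "l \<in> {m..n}" for l
  proof -
    have int1: "integrable PM (\<lambda>w. of_bool (Bl l w) * (S l w - S m w)\<^sup>2)"
      apply (rule dep_integrable[where B="4*B\<^sup>2" and n="l + c"])
       apply (rule dep_comb2[OF dBl dep_comb2[OF dS dep_mono[OF dS]]]) using l apply auto[2]
      by (rule order_trans[OF of_bool_mult_abs sqb2])
    have gb: "\<bar>of_bool (Bl l w) * (S l w - S m w)\<bar> \<le> 2 * B" for w
      using bS[of l w] bS[of m w] by auto
    have dg: "dep (l + c) (\<lambda>w. of_bool (Bl l w) * (S l w - S m w))"
      by (rule dep_comb2[OF dBl dep_comb2[OF dS dep_mono[OF dS]]]) (use l in auto)
    have o: "(\<integral>w. (S n w - S l w) * (of_bool (Bl l w) * (S l w - S m w)) \<partial>PM) = 0"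
      by (rule orth[OF _ dg gb]) (use l in auto)
    have int2: "integrable PM (\<lambda>w. (S n w - S l w) * (of_bool (Bl l w) * (S l w - S m w)))"
    proof (rule dep_integrable[where B="2*B*(2*B)" and n="n + c"])
      show "dep (n + c) (\<lambda>w. (S n w - S l w) * (of_bool (Bl l w) * (S l w - S m w)))"
        by (rule dep_comb2[OF dep_comb2[OF dS dep_mono[OF dS]] dep_mono[OF dg]]) (use l in auto)
      fix w
      have "\<bar>(S n w - S l w) * (of_bool (Bl l w) * (S l w - S m w))\<bar> = \<bar>S n w - S l w\<bar> * \<bar>of_bool (Bl l w) * (S l w - S m w)\<bar>"
        by (simp add: abs_mult)
      also have "\<dots> \<le> (2 * B) * (2 * B)"
        by (rule mult_mono) (use bS[of n w] bS[of l w] gb[of w] B_nonneg in auto)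
      finally show "\<bar>(S n w - S l w) * (of_bool (Bl l w) * (S l w - S m w))\<bar> \<le> 2 * B * (2 * B)" .
    qed
    have "\<epsilon>\<^sup>2 * (\<integral>w. of_bool (Bl l w) \<partial>PM) = (\<integral>w. \<epsilon>\<^sup>2 * of_bool (Bl l w) \<partial>PM)"
      by simp
    also have "\<dots> \<le> (\<integral>w. of_bool (Bl l w) * (S l w - S m w)\<^sup>2 \<partial>PM)"
    proof (rule integral_mono)
      show "integrable PM (\<lambda>w. \<epsilon>\<^sup>2 * of_bool (Bl l w))" using intBl[OF l] by simp
      show "integrable PM (\<lambda>w. of_bool (Bl l w) * (S l w - S m w)\<^sup>2)" by (rule int1)
      fix w
      show "\<epsilon>\<^sup>2 * of_bool (Bl l w) \<le> of_bool (Bl l w) * (S l w - S m w)\<^sup>2"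
      proof (cases "Bl l w")
        case True
        then have "\<epsilon> \<le> \<bar>S l w - S m w\<bar>" unfolding Bl_def by auto
        then have "\<epsilon>\<^sup>2 \<le> \<bar>S l w - S m w\<bar>\<^sup>2" using assms(2) by (intro power_mono) auto
        then show ?thesis using True by simp
      qed simp
    qed
    also have "\<dots> = (\<integral>w. of_bool (Bl l w) * (S l w - S m w)\<^sup>2 + 2 * ((S n w - S l w) * (of_bool (Bl l w) * (S l w - S m w))) \<partial>PM)"
      using o int1 int2 by simp
    also have "\<dots> \<le> (\<integral>w. of_bool (Bl l w) * (S n w - S m w)\<^sup>2 \<partial>PM)"
    proof (rule integral_mono)
      show "integrable PM (\<lambda>w. of_bool (Bl l w) * (S l w - S m w)\<^sup>2 + 2 * ((S n w - S l w) * (of_bool (Bl l w) * (S l w - S m w))))"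
        using int1 int2 by simp
      show "integrable PM (\<lambda>w. of_bool (Bl l w) * (S n w - S m w)\<^sup>2)" by (rule intBlsq[OF l])
      fix w
      have "(S l w - S m w)\<^sup>2 + 2 * ((S n w - S l w) * (S l w - S m w)) \<le> (S n w - S m w)\<^sup>2"
      proof -
        have "(S n w - S m w)\<^sup>2 - ((S l w - S m w)\<^sup>2 + 2 * ((S n w - S l w) * (S l w - S m w))) = (S n w - S l w)\<^sup>2"
          by (simp add: power2_eq_square algebra_simps)
        then show ?thesis by (smt (verit) zero_le_power2)
      qed
      then show "of_bool (Bl l w) * (S l w - S m w)\<^sup>2 + 2 * ((S n w - S l w) * (of_bool (Bl l w) * (S l w - S m w))) \<le> of_bool (Bl l w) * (S n w - S m w)\<^sup>2"
        by (cases "Bl l w") auto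
    qed
    finally show ?thesis .
  qed
  have "\<epsilon>\<^sup>2 * measure PM {w. E w} = \<epsilon>\<^sup>2 * (\<integral>w. of_bool (E w) \<partial>PM)"
  proof -
    have sets: "{w. E w} \<in> sets PM"
    proof -
      have "{w \<in> space PM. E w} \<in> sets PM" unfolding E_def by measurable
      then show ?thesis by (simp add: space_PM)
    qed
    have "(\<integral>w. of_bool (E w) \<partial>PM) = (\<integral>w. indicator {w. E w} w \<partial>PM)"
      by (simp add: indicator_def)
    also have "\<dots> = measure PM {w. E w}"
      using sets by simp
    finally show ?thesis by simp
  qed
  also have "\<dots> = \<epsilon>\<^sup>2 * (\<Sum>l\<in>{m..n}. (\<integral>w. of_bool (Bl l w) \<partial>PM))"
  proof -
    have "(\<integral>w. (\<Sum>l\<in>{m..n}. of_bool (Bl l w) :: real) \<partial>PM) = (\<Sum>l\<in>{m..n}. (\<integral>w. of_bool (Bl l w) \<partial>PM))"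
      by (rule Bochner_Integration.integral_sum) (erule intBl)
    then show ?thesis by (simp add: sumB)
  qed
  also have "\<dots> = (\<Sum>l\<in>{m..n}. \<epsilon>\<^sup>2 * (\<integral>w. of_bool (Bl l w) \<partial>PM))"
    by (simp add: sum_distrib_left)
  also have "\<dots> \<le> (\<Sum>l\<in>{m..n}. (\<integral>w. of_bool (Bl l w) * (S n w - S m w)\<^sup>2 \<partial>PM))"
    by (rule sum_mono[OF ineq])
  also have "\<dots> = (\<integral>w. of_bool (E w) * (S n w - S m w)\<^sup>2 \<partial>PM)"
    by (subst Bochner_Integration.integral_sum[symmetric]) (use intBlsq in \<open>auto simp: sum_distrib_right[symmetric] sumB\<close>)
  also have "\<dots> \<le> (\<integral>w. (S n w - S m w)\<^sup>2 \<partial>PM)"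
  proof (rule integral_mono)
    show "integrable PM (\<lambda>w. of_bool (E w) * (S n w - S m w)\<^sup>2)"
      apply (rule dep_integrable[where B="4*B\<^sup>2" and n="n + c"])
       apply (rule dep_comb2[OF dE dsq])
      by (rule order_trans[OF of_bool_mult_abs sqb2])
    show "integrable PM (\<lambda>w. (S n w - S m w)\<^sup>2)"
      by (rule dep_integrable[where B="4*B\<^sup>2", OF dsq sqb2])
  qed auto
  finally show ?thesis unfolding E_def .
qed

end



context mart begin

lemma v_mono: "m \<le> n \<Longrightarrow> (\<integral>w. (S m w)\<^sup>2 \<partial>PM) \<le> (\<integral>w. (S n w)\<^sup>2 \<partial>PM)"
  using sq_diff[of m n] integral_nonneg_AE[of "\<lambda>w. (S n w - S m w)\<^sup>2" PM] by simp

lemma sqB: "(S n w)\<^sup>2 \<le> B\<^sup>2"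
  using bS[of n w] B_nonneg power_mono[of "\<bar>S n w\<bar>" B 2] by simp

lemma v_bound: "(\<integral>w. (S n w)\<^sup>2 \<partial>PM) \<le> B\<^sup>2"
proof -
  interpret prob_space PM by (rule prob_PiM)
  have "(\<integral>w. (S n w)\<^sup>2 \<partial>PM) \<le> (\<integral>w. B\<^sup>2 \<partial>PM)"
  proof (rule integral_mono)
    show "integrable PM (\<lambda>w. (S n w)\<^sup>2)"
      by (rule dep_integrable[where B="B\<^sup>2", OF dep_comb1[OF dS]])
         (simp add: sqB)
    show "(S n w)\<^sup>2 \<le> B\<^sup>2" for w by (rule sqB)
  qed auto
  then show ?thesis using prob_space by simp
qed

lemma conv: "AE w in PM. convergent (\<lambda>n. S n w)"
proof -
  interpret prob_space PM by (rule prob_PiM)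
  define v where "v n = (\<integral>w. (S n w)\<^sup>2 \<partial>PM)" for n
  define L where "L = (SUP n. v n)"
  have incv: "incseq v" unfolding v_def incseq_def using v_mono by auto
  have bdd: "bdd_above (range v)" unfolding v_def by (rule bdd_aboveI2[where M="B\<^sup>2"]) (rule v_bound)
  have vL: "v n \<le> L" for n unfolding L_def by (rule cSUP_upper[OF _ bdd]) auto
  have limv: "v \<longlonglongrightarrow> L" unfolding L_def by (rule LIMSEQ_incseq_SUP[OF bdd incv])
  have key: "AE w in PM. \<exists>m. \<forall>l\<ge>m. \<bar>S l w - S m w\<bar> < \<epsilon>" if eps: "0 < \<epsilon>" for \<epsilon>
  proof -
    define G where "G = {w. \<forall>m. \<exists>l\<ge>m. \<epsilon> \<le> \<bar>S l w - S m w\<bar>}"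
    have Gs: "G \<in> sets PM"
    proof -
      have "{w \<in> space PM. \<forall>m. \<exists>l\<ge>m. \<epsilon> \<le> \<bar>S l w - S m w\<bar>} \<in> sets PM" by measurable
      then show ?thesis unfolding G_def by (simp add: space_PM)
    qed
    have bound: "measure PM G \<le> (L - v m) / \<epsilon>\<^sup>2" for m
    proof -
      define A where "A n = {w. \<exists>l\<in>{m..m+n}. \<epsilon> \<le> \<bar>S l w - S m w\<bar>}" for n
      have As: "A n \<in> sets PM" for n
      proof -
        have "{w \<in> space PM. \<exists>l\<in>{m..m+n}. \<epsilon> \<le> \<bar>S l w - S m w\<bar>} \<in> sets PM" by measurable
        then show ?thesis unfolding A_def by (simp add: space_PM)
      qed
      have incA: "incseq A" unfolding A_def incseq_def by force
      have lim: "(\<lambda>n. measure PM (A n)) \<longlonglongrightarrow> measure PM (\<Union>n. A n)"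
        by (rule finite_Lim_measure_incseq) (use As incA in auto)
      have "measure PM (A n) \<le> (L - v m) / \<epsilon>\<^sup>2" for n
      proof -
        have "\<epsilon>\<^sup>2 * measure PM (A n) \<le> (\<integral>w. (S (m+n) w - S m w)\<^sup>2 \<partial>PM)"
          unfolding A_def by (rule kolmo[OF _ eps]) simp
        also have "\<dots> = v (m+n) - v m" unfolding v_def by (rule sq_diff) simp
        also have "\<dots> \<le> L - v m" using vL[of "m+n"] by simp
        finally show ?thesis using eps by (simp add: field_simps)
      qed
      then have "measure PM (\<Union>n. A n) \<le> (L - v m) / \<epsilon>\<^sup>2"
        by (intro LIMSEQ_le_const2[OF lim]) auto
      moreover have "G \<subseteq> (\<Union>n. A n)"
      proof
        fix w assume "w \<in> G"
        then obtain l where "l \<ge> m" "\<epsilon> \<le> \<bar>S l w - S m w\<bar>" unfolding G_def by blast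
        then have "w \<in> A (l - m)" unfolding A_def by auto
        then show "w \<in> (\<Union>n. A n)" by blast
      qed
      moreover have "(\<Union>n. A n) \<in> sets PM" using As by auto
      ultimately show ?thesis using finite_measure_mono by (meson order_trans)
    qed
    have "(\<lambda>m. (L - v m) / \<epsilon>\<^sup>2) \<longlonglongrightarrow> (L - L) / \<epsilon>\<^sup>2"
      using eps by (intro tendsto_intros limv) simp
    then have "measure PM G \<le> 0"
      by (intro LIMSEQ_le_const[where X="\<lambda>m. (L - v m) / \<epsilon>\<^sup>2"]) (use bound in auto)
    then have "measure PM G = 0" by (simp add: measure_le_0_iff)
    then have "G \<in> null_sets PM" using Gs by (simp add: emeasure_eq_measure null_sets_def)
    then show ?thesis
      by (rule AE_I') (auto simp: G_def not_less)
  qed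
  have "AE w in PM. \<forall>k::nat. \<exists>m. \<forall>l\<ge>m. \<bar>S l w - S m w\<bar> < 1 / Suc k"
    by (subst AE_all_countable) (auto intro: key)
  then show ?thesis
  proof (rule AE_mp, intro AE_I2 impI)
    fix w assume H: "\<forall>k::nat. \<exists>m. \<forall>l\<ge>m. \<bar>S l w - S m w\<bar> < 1 / Suc k"
    have "Cauchy (\<lambda>n. S n w)"
    proof (rule metric_CauchyI)
      fix e :: real assume "0 < e"
      then obtain k :: nat where k: "1 / Suc k < e / 2"
        by (metis half_gt_zero nat_approx_posE)
      obtain m where m: "\<forall>l\<ge>m. \<bar>S l w - S m w\<bar> < 1 / Suc k" using H by blast
      have "dist (S a w) (S b w) < e" if "a \<ge> m" "b \<ge> m" for a b
      proof -
        have "\<bar>S a w - S m w\<bar> < 1 / Suc k" "\<bar>S b w - S m w\<bar> < 1 / Suc k" using m that by auto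
        then show ?thesis using k by (simp add: dist_real_def)
      qed
      then show "\<exists>M. \<forall>a\<ge>M. \<forall>b\<ge>M. dist (S a w) (S b w) < e" by blast
    qed
    then show "convergent (\<lambda>n. S n w)" by (simp add: Cauchy_convergent_iff)
  qed
qed

end



lemma typs_stable: "i \<le> n + 1 \<Longrightarrow> typs w (n + d) i = typs w n i"
  by (induction d) auto

lemma typs_outside: "i = 0 \<or> n + 1 < i \<Longrightarrow> typs w n i = 1"
  by (induction n) auto

lemma yt_eq: "1 \<le> i \<Longrightarrow> i \<le> n + 1 \<Longrightarrow> typs w n i = yule_type w i"
proof -
  assume a: "1 \<le> i" "i \<le> n + 1"
  have "typs w n i = typs w ((i - 1) + (n - (i - 1))) i" using a by simp
  also have "\<dots> = typs w (i - 1) i" by (rule typs_stable) (use a in auto)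
  also have "\<dots> = typs w ((i - 1) + 1) i" by (rule typs_stable[symmetric]) (use a in auto)
  also have "\<dots> = yule_type w i" using a by (simp add: yule_type_def)
  finally show ?thesis .
qed

lemma yt_1[simp]: "yule_type w (Suc 0) = Suc 0"
  by (simp add: yule_type_def)

lemma yt_SS: "yule_type w (Suc (Suc n)) =
   (if snd (w n) then n + 2 else if 1 \<le> fst (w n) \<and> fst (w n) \<le> n + 1 then yule_type w (fst (w n)) else 1)"
proof -
  have "yule_type w (Suc (Suc n)) = typs w ((n + 1) + 1) (n + 2)" by (simp add: yule_type_def)
  also have "\<dots> = typs w (Suc n) (n + 2)" by (subst typs_stable) auto
  also have "\<dots> = (if snd (w n) then n + 2 else typs w n (fst (w n)))" by simp
  also have "\<dots> = (if snd (w n) then n + 2 else if 1 \<le> fst (w n) \<and> fst (w n) \<le> n + 1 then yule_type w (fst (w n)) else 1)"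
    using yt_eq[of "fst (w n)" n w] typs_outside[of "fst (w n)" n w] by auto
  finally show ?thesis .
qed

lemma yt_range: "1 \<le> i \<Longrightarrow> 1 \<le> yule_type w i \<and> yule_type w i \<le> i"
proof (induction i rule: less_induct)
  case (less i)
  show ?case
  proof (cases i)
    case 0 then show ?thesis using less by simp
  next
    case (Suc j)
    show ?thesis
    proof (cases j)
      case 0 then show ?thesis using Suc by (simp add: yt_1)
    next
      case (Suc n)
      have "1 \<le> fst (w n) \<Longrightarrow> fst (w n) \<le> n + 1 \<Longrightarrow> 1 \<le> yule_type w (fst (w n)) \<and> yule_type w (fst (w n)) \<le> fst (w n)"
        using less.IH[of "fst (w n)"] \<open>i = Suc j\<close> Suc by auto
      then show ?thesis using \<open>i = Suc j\<close> Suc by (auto simp: yt_SS)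
    qed
  qed
qed

lemma yt_dep: "1 \<le> i \<Longrightarrow> dep (i - 1) (\<lambda>w. yule_type w i)"
proof (induction i rule: less_induct)
  case (less i)
  show ?case
  proof (cases i)
    case 0 then show ?thesis using less by simp
  next
    case (Suc j)
    show ?thesis
    proof (cases j)
      case 0 then show ?thesis using Suc by (simp add: yt_1 dep_const)
    next
      case (Suc n)
      show ?thesis
      proof (rule depI)
        fix w w' :: "nat \<Rightarrow> nat \<times> bool" assume a: "\<And>l. l < i - 1 \<Longrightarrow> w l = w' l"
        have wn: "w n = w' n" using a \<open>i = Suc j\<close> Suc by auto
        have "yule_type w q = yule_type w' q" if "1 \<le> q" "q \<le> n + 1" for q
          by (rule depD[OF less.IH[of q]]) (use that a \<open>i = Suc j\<close> Suc in auto)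
        then show "yule_type w i = yule_type w' i"
          using \<open>i = Suc j\<close> Suc wn by (simp add: yt_SS)
      qed
    qed
  qed
qed

definition cnt :: "nat \<Rightarrow> nat \<Rightarrow> (nat \<Rightarrow> nat \<times> bool) \<Rightarrow> nat" where
  "cnt a m w = card {i \<in> {1..m}. yule_type w i \<in> {1..a}}"

lemma cnt_0: "cnt a 0 w = 0" by (simp add: cnt_def)

lemma cnt_Suc: "cnt a (Suc m) w = cnt a m w + (if yule_type w (Suc m) \<le> a then 1 else 0)"
proof -
  have ins: "{i \<in> {1..Suc m}. yule_type w i \<in> {1..a}} =
     (if yule_type w (Suc m) \<le> a then insert (Suc m) else (\<lambda>x. x)) {i \<in> {1..m}. yule_type w i \<in> {1..a}}"
  proof -
    have "1 \<le> yule_type w (Suc m)" using yt_range[of "Suc m" w] by simp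
    then show ?thesis by (auto simp: le_Suc_eq)
  qed
  show ?thesis unfolding cnt_def ins by auto
qed

lemma cnt_le: "cnt a m w \<le> m"
proof -
  have "cnt a m w \<le> card {1..m}" unfolding cnt_def by (rule card_mono) auto
  then show ?thesis by simp
qed

lemma cnt_full: "m \<le> a \<Longrightarrow> cnt a m w = m"
proof -
  assume "m \<le> a"
  then have "{i \<in> {1..m}. yule_type w i \<in> {1..a}} = {1..m}"
    using yt_range[of _ w] by fastforce
  then show ?thesis by (simp add: cnt_def)
qed

lemma cnt_mono: "a \<le> b \<Longrightarrow> cnt a m w \<le> cnt b m w"
  unfolding cnt_def by (rule card_mono) auto

lemma cnt_pos: "1 \<le> a \<Longrightarrow> 1 \<le> m \<Longrightarrow> 1 \<le> cnt a m w"
proof -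
  assume "1 \<le> a" "1 \<le> m"
  then have "1 \<in> {i \<in> {1..m}. yule_type w i \<in> {1..a}}" by (simp add: yt_1)
  then have "{i \<in> {1..m}. yule_type w i \<in> {1..a}} \<noteq> {}" by blast
  then show ?thesis unfolding cnt_def by (simp add: Suc_leI card_gt_0_iff)
qed

lemma cnt_dep: "dep (m - 1) (cnt a m)"
proof (induction m)
  case 0 then show ?case by (simp add: cnt_0 dep_const)
next
  case (Suc m)
  show ?case
  proof (rule depI)
    fix w w' :: "nat \<Rightarrow> nat \<times> bool" assume a: "\<And>i. i < Suc m - 1 \<Longrightarrow> w i = w' i"
    have "cnt a m w = cnt a m w'" by (rule depD[OF Suc.IH]) (use a in auto)
    moreover have "yule_type w (Suc m) = yule_type w' (Suc m)" by (rule depD[OF yt_dep]) (use a in auto)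
    ultimately show "cnt a (Suc m) w = cnt a (Suc m) w'" by (simp add: cnt_Suc)
  qed
qed

lemma card_type_eq: "1 \<le> j \<Longrightarrow> card {i \<in> {1..N}. yule_type w i = j} = cnt j N w - cnt (j - 1) N w"
proof -
  assume j: "1 \<le> j"
  have un: "{i \<in> {1..N}. yule_type w i \<in> {1..j}} = {i \<in> {1..N}. yule_type w i \<in> {1..j-1}} \<union> {i \<in> {1..N}. yule_type w i = j}"
    using j by auto
  have "cnt j N w = cnt (j - 1) N w + card {i \<in> {1..N}. yule_type w i = j}"
    unfolding cnt_def un by (subst card_Un_disjoint) auto
  then show ?thesis by simp
qed

lemma Xf_cnt: "Xf k N w = real (cnt k N w) / real N"
  by (simp add: Xf_def cnt_def)

lemma Vf_cnt: "2 \<le> j \<Longrightarrow> 1 \<le> N \<Longrightarrow> Vf j N w = 1 - real (cnt (j - 1) N w) / real (cnt j N w)"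
proof -
  assume j: "2 \<le> j" and N: "1 \<le> N"
  have pos: "1 \<le> cnt j N w" using cnt_pos j N by auto
  have le: "cnt (j - 1) N w \<le> cnt j N w" by (rule cnt_mono) auto
  have "Vf j N w = real (cnt j N w - cnt (j - 1) N w) / real (cnt j N w)"
    unfolding Vf_def using card_type_eq[of j N w] j by (simp add: cnt_def)
  also have "\<dots> = 1 - real (cnt (j - 1) N w) / real (cnt j N w)"
    using pos le by (simp add: of_nat_diff field_simps)
  finally show ?thesis .
qed




definition Pr :: "real \<Rightarrow> nat \<Rightarrow> (nat \<times> bool) pmf" where
  "Pr r n = pair_pmf (pmf_of_set {1..Suc n}) (bernoulli_pmf r)"

lemma yule_space_Pr: "yule_space r = PiM UNIV (\<lambda>n. measure_pmf (Pr r n))"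
  by (simp add: yule_space_def Pr_def)

definition R :: "nat \<Rightarrow> nat \<Rightarrow> nat \<Rightarrow> (nat \<Rightarrow> nat \<times> bool) \<Rightarrow> real" where
  "R a b m w = real (cnt a m w) / real (cnt b m w)"

lemma cnt_tq: "card ({1..m} \<inter> {q. yule_type w q \<le> a}) = cnt a m w"
proof -
  have "{1..m} \<inter> {q. yule_type w q \<le> a} = {i \<in> {1..m}. yule_type w i \<in> {1..a}}"
    using yt_range[of _ w] by fastforce
  then show ?thesis by (simp add: cnt_def)
qed

lemma gen_sumA:
  fixes F :: "nat \<Rightarrow> real"
  assumes "finite I"
  shows "(\<Sum>q\<in>I. c * (x + d * F q)) = c * (real (card I) * x + d * (\<Sum>q\<in>I. F q))"
  by (simp add: sum_distrib_left sum.distrib algebra_simps)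

lemma gen_sumB:
  assumes "finite I"
  shows "(\<Sum>q\<in>I. x + of_bool (P q) * y + of_bool (Q q) * (z::real)) =
     real (card I) * x + real (card (I \<inter> {q. P q})) * y + real (card (I \<inter> {q. Q q})) * z"
proof -
  have "(\<Sum>q\<in>I. x + of_bool (P q) * y + of_bool (Q q) * z) = (\<Sum>q\<in>I. x) + (\<Sum>q\<in>I. of_bool (P q)) * y + (\<Sum>q\<in>I. of_bool (Q q)) * z"
    by (simp only: sum.distrib sum_distrib_right)
  then show ?thesis using assms by simp
qed

lemma sumF:
  assumes "1 \<le> a" "a \<le> b" "b \<le> Suc n"
  shows "(\<Sum>q\<in>{1..Suc n}. (real (cnt a (Suc n) w) + of_bool (yule_type w q \<le> a)) /
            (real (cnt b (Suc n) w) + of_bool (yule_type w q \<le> b)))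
         = real (Suc n) * (real (cnt a (Suc n) w) / real (cnt b (Suc n) w))"
proof -
  define ca where "ca = real (cnt a (Suc n) w)"
  define cb where "cb = real (cnt b (Suc n) w)"
  have cbpos: "cb \<ge> 1" unfolding cb_def using cnt_pos[of b "Suc n" w] assms by simp
  have eqF: "(ca + of_bool (yule_type w q \<le> a)) / (cb + of_bool (yule_type w q \<le> b)) =
       ca / cb + of_bool (yule_type w q \<le> a) * (1 / (cb + 1)) + of_bool (yule_type w q \<le> b) * (ca / (cb + 1) - ca / cb)" for q
  proof (cases "yule_type w q \<le> a")
    case True
    then have "yule_type w q \<le> b" using assms by simp
    then show ?thesis using True add_divide_distrib[of ca 1 "cb + 1"] by (simp add: add.commute)
  next
    case False
    then show ?thesis by (cases "yule_type w q \<le> b") simp_all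
  qed
  have "(\<Sum>q\<in>{1..Suc n}. (ca + of_bool (yule_type w q \<le> a)) / (cb + of_bool (yule_type w q \<le> b)))
     = (\<Sum>q\<in>{1..Suc n}. ca / cb + of_bool (yule_type w q \<le> a) * (1 / (cb + 1)) + of_bool (yule_type w q \<le> b) * (ca / (cb + 1) - ca / cb))"
    by (rule sum.cong[OF refl]) (rule eqF)
  also have "\<dots> = real (Suc n) * (ca / cb) + ca * (1 / (cb + 1)) + cb * (ca / (cb + 1) - ca / cb)"
    by (subst gen_sumB) (simp_all only: finite_atLeastAtMost cnt_tq ca_def cb_def card_atLeastAtMost diff_Suc_1)
  also have "\<dots> = real (Suc n) * (ca / cb)"
  proof -
    have nz: "cb \<noteq> 0" "cb + 1 \<noteq> 0" using cbpos by auto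
    have h1: "cb * (ca / cb) = ca" using nz by simp
    have "ca * (1 / (cb + 1)) + cb * (ca / (cb + 1)) = (cb + 1) * (ca / (cb + 1))" by (simp add: algebra_simps add_divide_distrib)
    also have "\<dots> = ca" using nz by simp
    finally have h2: "ca * (1 / (cb + 1)) + cb * (ca / (cb + 1)) = ca" .
    show ?thesis using h1 h2 by (simp only: right_diff_distrib)
  qed
  finally show ?thesis unfolding ca_def cb_def .
qed

lemma aux1: "(n1::real) \<noteq> 0 \<Longrightarrow> 1 / n1 * (n1 * (r * x) + (1 - r) * (n1 * x)) = x"
  by (simp add: field_simps)

lemma mstep:
  assumes "1 \<le> a" "a \<le> b" "b \<le> Suc n" "0 \<le> r" "r \<le> 1"
  shows "(\<integral>x. R a b (Suc (Suc n)) (w(n := x)) \<partial>measure_pmf (Pr r n)) = R a b (Suc n) w"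
proof -
  define ca where "ca = real (cnt a (Suc n) w)"
  define cb where "cb = real (cnt b (Suc n) w)"
  have cbpos: "cb \<ge> 1" unfolding cb_def using cnt_pos[of b "Suc n" w] assms by simp
  have val: "R a b (Suc (Suc n)) (w(n := (q, f))) =
     (if f then ca / cb else (ca + of_bool (yule_type w q \<le> a)) / (cb + of_bool (yule_type w q \<le> b)))"
    if q: "q \<in> {1..Suc n}" for q f
  proof -
    let ?w' = "w(n := (q, f))"
    have c1: "cnt c (Suc n) ?w' = cnt c (Suc n) w" for c
      by (rule depD[OF cnt_dep]) auto
    have t1: "yule_type (w(n := (q, f'))) q = yule_type w q" for f'
      by (rule depD[OF yt_dep]) (use q in auto)
    have t2: "yule_type ?w' (Suc (Suc n)) = (if f then n + 2 else yule_type w q)"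
      using q t1 by (simp add: yt_SS)
    show ?thesis
      unfolding R_def cnt_Suc[of _ "Suc n"] c1 t2 ca_def cb_def using assms by auto
  qed
  have "(\<integral>x. R a b (Suc (Suc n)) (w(n := x)) \<partial>measure_pmf (Pr r n)) =
      (\<Sum>x\<in>{1..Suc n} \<times> UNIV. pmf (Pr r n) x *\<^sub>R R a b (Suc (Suc n)) (w(n := x)))"
    by (rule integral_measure_pmf) (auto simp: Pr_def)
  also have "\<dots> = (\<Sum>q\<in>{1..Suc n}. \<Sum>f\<in>UNIV. pmf (Pr r n) (q, f) * R a b (Suc (Suc n)) (w(n := (q, f))))"
    by (simp add: sum.cartesian_product)
  also have "\<dots> = (\<Sum>q\<in>{1..Suc n}. (1 / real (Suc n)) * (r * (ca / cb) + (1 - r) * ((ca + of_bool (yule_type w q \<le> a)) / (cb + of_bool (yule_type w q \<le> b)))))"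
  proof (rule sum.cong[OF refl])
    fix q assume q: "q \<in> {1..Suc n}"
    show "(\<Sum>f\<in>UNIV. pmf (Pr r n) (q, f) * R a b (Suc (Suc n)) (w(n := (q, f)))) =
      (1 / real (Suc n)) * (r * (ca / cb) + (1 - r) * ((ca + of_bool (yule_type w q \<le> a)) / (cb + of_bool (yule_type w q \<le> b))))"
    proof -
      define Fq where "Fq = (ca + of_bool (yule_type w q \<le> a)) / (cb + of_bool (yule_type w q \<le> b))"
      have pm: "pmf (Pr r n) (q, f) = (1 / real (Suc n)) * (if f then r else 1 - r)" for f
        using q assms by (simp add: Pr_def pmf_pair)
      have "(\<Sum>f\<in>UNIV. pmf (Pr r n) (q, f) * R a b (Suc (Suc n)) (w(n := (q, f)))) =
          pmf (Pr r n) (q, True) * R a b (Suc (Suc n)) (w(n := (q, True))) + pmf (Pr r n) (q, False) * R a b (Suc (Suc n)) (w(n := (q, False)))"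
        by (simp add: UNIV_bool)
      also have "\<dots> = (1 / real (Suc n) * r) * (ca / cb) + (1 / real (Suc n) * (1 - r)) * Fq"
        unfolding pm val[OF q] Fq_def by simp
      also have "\<dots> = (1 / real (Suc n)) * (r * (ca / cb) + (1 - r) * Fq)"
        by (simp only: algebra_simps)
      finally show ?thesis unfolding Fq_def .
    qed
  qed
  also have "\<dots> = (1 / real (Suc n)) * (real (Suc n) * (r * (ca / cb)) + (1 - r) * (\<Sum>q\<in>{1..Suc n}. (ca + of_bool (yule_type w q \<le> a)) / (cb + of_bool (yule_type w q \<le> b))))"
    by (subst gen_sumA) simp_all
  also have "\<dots> = (1 / real (Suc n)) * (real (Suc n) * (r * (ca / cb)) + (1 - r) * (real (Suc n) * (ca / cb)))"
    unfolding ca_def cb_def using sumF[OF assms(1-3), of w] by simp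
  also have "\<dots> = ca / cb"
    by (rule aux1) simp
  finally show ?thesis by (simp add: R_def ca_def cb_def)
qed




lemma incr_ineq:
  fixes a b d :: real
  assumes "0 \<le> a" "a \<le> b" "1 \<le> b" "0 \<le> d" "d \<le> 1"
  shows "((a + d) / (b + 1) - a / b)\<^sup>2 \<le> 1 / b - 1 / (b + 1)"
proof -
  have nz: "b \<noteq> 0" "b + 1 \<noteq> 0" using assms by auto
  have e1: "(a + d) / (b + 1) - a / b = (d * b - a) / (b * (b + 1))"
    using nz by (simp add: field_simps)
  have e2: "1 / b - 1 / (b + 1) = 1 / (b * (b + 1))"
    using nz by (simp add: field_simps)
  have "d * b \<le> b" using assms mult_left_le_one_le[of b d] by auto
  moreover have "0 \<le> d * b" using assms by simp
  ultimately have ab: "\<bar>d * b - a\<bar> \<le> b" unfolding abs_le_iff using assms by linarith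
  have sq: "(d * b - a)\<^sup>2 \<le> b\<^sup>2"
    using power_mono[OF ab, of 2] by simp
  have Dpos: "0 < b * (b + 1)" using assms by simp
  have "((d * b - a) / (b * (b + 1)))\<^sup>2 = (d * b - a)\<^sup>2 / (b * (b + 1))\<^sup>2"
    by (simp add: power_divide)
  also have "\<dots> \<le> b\<^sup>2 / (b * (b + 1))\<^sup>2"
    using sq Dpos by (intro divide_right_mono) auto
  also have "\<dots> = 1 / (b + 1)\<^sup>2"
    using nz by (simp add: power_mult_distrib)
  also have "\<dots> \<le> 1 / (b * (b + 1))"
  proof (rule divide_left_mono)
    show "b * (b + 1) \<le> (b + 1)\<^sup>2" using assms by (simp add: power2_eq_square)
  qed (use Dpos assms in auto)
  finally show ?thesis unfolding e1 e2 .
qed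

lemma R_dep: "1 \<le> m \<Longrightarrow> dep (m - 1) (R a b m)"
  unfolding R_def by (rule dep_comb2[OF cnt_dep cnt_dep])

lemma R_bound: "1 \<le> a \<Longrightarrow> a \<le> b \<Longrightarrow> 1 \<le> m \<Longrightarrow> 0 \<le> R a b m w \<and> R a b m w \<le> 1"
  unfolding R_def using cnt_mono[of a b m w] cnt_pos[of b m w] by auto

lemma mart_R:
  assumes "1 \<le> a" "a \<le> b" "0 \<le> r" "r \<le> 1"
  shows "mart (Pr r) (\<lambda>n. R a b (n + b)) (b - 1) 1"
proof
  fix n
  show "dep (n + (b - 1)) (R a b (n + b))"
    using R_dep[of "n + b" a b] assms by simp
  fix w
  show "\<bar>R a b (n + b) w\<bar> \<le> 1" using R_bound[of a b "n + b" w] assms by auto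
  have e: "n + (b - 1) = n + b - 1" "Suc (n + b - 1) = n + b" using assms by auto
  have "(\<integral>x. R a b (Suc (Suc (n + b - 1))) (w(n + b - 1 := x)) \<partial>measure_pmf (Pr r (n + b - 1))) = R a b (Suc (n + b - 1)) w"
    by (rule mstep) (use assms in auto)
  then show "(\<integral>x. R a b (Suc n + b) (w(n + (b - 1) := x)) \<partial>measure_pmf (Pr r (n + (b - 1)))) = R a b (n + b) w"
    unfolding e by simp
qed

lemma W_lim:
  assumes "2 \<le> j" "0 \<le> r" "r \<le> 1"
  shows "AE w in yule_space r. (\<lambda>M. R (j - 1) j M w) \<longlonglongrightarrow> 1 - Wf j w"
proof -
  interpret mart "Pr r" "\<lambda>n. R (j - 1) j (n + j)" "j - 1" 1
    by (rule mart_R) (use assms in auto)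
  show ?thesis
    unfolding yule_space_Pr
  proof (rule AE_mp[OF conv], intro AE_I2 impI)
    fix w assume "convergent (\<lambda>n. R (j - 1) j (n + j) w)"
    then obtain L where L: "(\<lambda>n. R (j - 1) j (n + j) w) \<longlonglongrightarrow> L" by (auto simp: convergent_def)
    then have L': "(\<lambda>M. R (j - 1) j M w) \<longlonglongrightarrow> L" by (rule LIMSEQ_offset)
    have ev: "eventually (\<lambda>M. 1 - R (j - 1) j M w = Vf j M w) sequentially"
      using eventually_ge_at_top[of 1]
      by eventually_elim (use assms in \<open>simp add: Vf_cnt R_def\<close>)
    have "(\<lambda>M. 1 - R (j - 1) j M w) \<longlonglongrightarrow> 1 - L" by (intro tendsto_intros L')
    then have V: "(\<lambda>M. Vf j M w) \<longlonglongrightarrow> 1 - L" by (rule Lim_transform_eventually[OF _ ev])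
    then have "Wf j w = 1 - L" unfolding Wf_def by (rule limI)
    then show "(\<lambda>M. R (j - 1) j M w) \<longlonglongrightarrow> 1 - Wf j w" using L' by simp
  qed
qed

lemma telescope:
  assumes "1 \<le> k" "k \<le> N" "1 \<le> M"
  shows "(\<Prod>j\<in>{k+1..N}. R (j - 1) j M w) = R k N M w"
  using assms(2)
proof (induction N rule: dec_induct)
  case base
  have "cnt k M w \<noteq> 0" using cnt_pos[of k M w] assms by auto
  then show ?case by (simp add: R_def)
next
  case (step N)
  have ins: "{k+1..Suc N} = insert (Suc N) {k+1..N}" using step.hyps by auto
  have nz: "cnt N M w \<noteq> 0" using cnt_pos[of N M w] assms step.hyps by auto
  have "(\<Prod>j\<in>{k+1..Suc N}. R (j - 1) j M w) = R N (Suc N) M w * R k N M w"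
    unfolding ins using step.IH by (subst prod.insert) auto
  also have "\<dots> = R k (Suc N) M w" using nz by (simp add: R_def)
  finally show ?case .
qed

lemma Y_lim:
  assumes "1 \<le> k" "k \<le> N" "0 \<le> r" "r \<le> 1"
  shows "AE w in yule_space r. (\<lambda>M. R k N M w) \<longlonglongrightarrow> Yf k N w"
proof -
  have "AE w in yule_space r. \<forall>j\<in>{k+1..N}. (\<lambda>M. R (j - 1) j M w) \<longlonglongrightarrow> 1 - Wf j w"
    by (subst AE_ball_countable) (use W_lim assms in auto)
  then show ?thesis
  proof (rule AE_mp, intro AE_I2 impI)
    fix w assume H: "\<forall>j\<in>{k+1..N}. (\<lambda>M. R (j - 1) j M w) \<longlonglongrightarrow> 1 - Wf j w"
    have "(\<lambda>M. \<Prod>j\<in>{k+1..N}. R (j - 1) j M w) \<longlonglongrightarrow> (\<Prod>j\<in>{k+1..N}. 1 - Wf j w)"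
      by (rule tendsto_prod) (use H in auto)
    moreover have "eventually (\<lambda>M. (\<Prod>j\<in>{k+1..N}. R (j - 1) j M w) = R k N M w) sequentially"
      using eventually_ge_at_top[of 1] by eventually_elim (rule telescope, use assms in auto)
    ultimately show "(\<lambda>M. R k N M w) \<longlonglongrightarrow> Yf k N w"
      unfolding Yf_def by (rule Lim_transform_eventually)
  qed
qed




lemma incr_R:
  assumes "1 \<le> k" "k \<le> N" "N \<le> M"
  shows "(R k N (Suc M) w - R k N M w)\<^sup>2 \<le> 1 / real (cnt N M w) - 1 / real (cnt N (Suc M) w)"
proof (cases "yule_type w (Suc M) \<le> N")
  case True
  have b1: "1 \<le> real (cnt N M w)" using cnt_pos[of N M w] assms by auto
  have ab: "real (cnt k M w) \<le> real (cnt N M w)" using cnt_mono[of k N M w] assms by auto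
  have "(R k N (Suc M) w - R k N M w)\<^sup>2 =
     ((real (cnt k M w) + of_bool (yule_type w (Suc M) \<le> k)) / (real (cnt N M w) + 1) - real (cnt k M w) / real (cnt N M w))\<^sup>2"
    using True by (simp add: R_def cnt_Suc add.commute)
  also have "\<dots> \<le> 1 / real (cnt N M w) - 1 / (real (cnt N M w) + 1)"
    by (rule incr_ineq) (use b1 ab in auto)
  also have "\<dots> = 1 / real (cnt N M w) - 1 / real (cnt N (Suc M) w)"
    using True by (simp add: cnt_Suc)
  finally show ?thesis .
next
  case False
  then show ?thesis using assms by (simp add: R_def cnt_Suc)
qed

theorem lemma3p5:
  fixes r :: real and N k :: nat
  assumes "0 < r" and "r < 1" and "1 \<le> N" and "1 \<le> k" and "k \<le> N"
  shows "(\<integral>\<^sup>+ \<omega>. ennreal ((Xf k N \<omega> - Yf k N \<omega>)\<^sup>2) \<partial>yule_space r) \<le> ennreal (3 / real N)"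
proof -
  have r: "0 \<le> r" "r \<le> 1" using assms by auto
  interpret mart "Pr r" "\<lambda>n. R k N (n + N)" "N - 1" 1
    by (rule mart_R) (use assms in auto)
  interpret prob_space PM by (rule prob_PiM)
  define S where "S n w = R k N (n + N) w" for n w
  define c where "c n w = 1 / real (cnt N (n + N) w)" for n w
  have cb: "\<bar>c n w\<bar> \<le> 1" "0 \<le> c n w" for n w
    using cnt_pos[of N "n + N" w] assms unfolding c_def by auto
  have c0: "c 0 w = 1 / real N" for w unfolding c_def by (simp add: cnt_full)
  have S0: "S 0 w = Xf k N w" for w unfolding S_def R_def Xf_cnt by (simp add: cnt_full)
  have intc: "integrable PM (c n)" for n
  proof (rule dep_integrable[where B=1 and n="n + N - 1"])
    show "dep (n + N - 1) (c n)" unfolding c_def by (rule dep_comb1[OF cnt_dep])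
  qed (rule cb)
  have sqS: "integrable PM (\<lambda>w. (S n w - S m w)\<^sup>2)" for n m
  proof (rule dep_integrable[where B="4 * 1\<^sup>2" and n="max n m + (N - 1)"])
    show "dep (max n m + (N - 1)) (\<lambda>w. (S n w - S m w)\<^sup>2)"
      unfolding S_def by (rule dep_comb2[OF dep_mono[OF dS] dep_mono[OF dS]]) auto
    show "\<bar>(S n w - S m w)\<^sup>2\<bar> \<le> 4 * 1\<^sup>2" for w unfolding S_def by (rule sqb2)
  qed
  have main: "(\<integral>w. (S n w)\<^sup>2 \<partial>PM) + (\<integral>w. c n w \<partial>PM) \<le> (\<integral>w. (S 0 w)\<^sup>2 \<partial>PM) + 1 / real N" for n
  proof (induction n)
    case 0
    then show ?case by (simp add: c0 prob_space)
  next
    case (Suc n)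
    have "(\<integral>w. (S (Suc n) w)\<^sup>2 \<partial>PM) - (\<integral>w. (S n w)\<^sup>2 \<partial>PM) = (\<integral>w. (S (Suc n) w - S n w)\<^sup>2 \<partial>PM)"
      unfolding S_def by (rule sq_diff[symmetric]) simp
    also have "\<dots> \<le> (\<integral>w. c n w - c (Suc n) w \<partial>PM)"
    proof (rule integral_mono)
      show "integrable PM (\<lambda>w. (S (Suc n) w - S n w)\<^sup>2)" by (rule sqS)
      show "integrable PM (\<lambda>w. c n w - c (Suc n) w)" using intc by auto
      fix w
      show "(S (Suc n) w - S n w)\<^sup>2 \<le> c n w - c (Suc n) w"
        unfolding S_def c_def using incr_R[of k N "n + N" w] assms by simp
    qed
    also have "\<dots> = (\<integral>w. c n w \<partial>PM) - (\<integral>w. c (Suc n) w \<partial>PM)"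
      by (rule Bochner_Integration.integral_diff[OF intc intc])
    finally show ?case using Suc.IH by simp
  qed
  have bnd: "(\<integral>w. (S 0 w - S n w)\<^sup>2 \<partial>PM) \<le> 1 / real N" for n
  proof -
    have "(\<integral>w. (S 0 w - S n w)\<^sup>2 \<partial>PM) = (\<integral>w. (S n w - S 0 w)\<^sup>2 \<partial>PM)"
      by (simp add: power2_commute)
    also have "\<dots> = (\<integral>w. (S n w)\<^sup>2 \<partial>PM) - (\<integral>w. (S 0 w)\<^sup>2 \<partial>PM)"
      unfolding S_def by (rule sq_diff) simp
    also have "\<dots> \<le> 1 / real N - (\<integral>w. c n w \<partial>PM)" using main[of n] by simp
    also have "\<dots> \<le> 1 / real N" using integral_nonneg_AE[of "c n" PM] cb by simp
    finally show ?thesis .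
  qed
  have lim: "AE w in PM. (\<lambda>n. S n w) \<longlonglongrightarrow> Yf k N w"
  proof -
    have "AE w in PM. (\<lambda>M. R k N M w) \<longlonglongrightarrow> Yf k N w"
      using Y_lim[of k N r] assms r unfolding yule_space_Pr by simp
    then show ?thesis
      by (rule AE_mp) (auto intro!: AE_I2 simp: S_def intro: LIMSEQ_ignore_initial_segment)
  qed
  define u where "u n w = ennreal ((S 0 w - S n w)\<^sup>2)" for n w
  have umeas: "u n \<in> borel_measurable PM" for n
    unfolding u_def S_def by measurable
  have liminf_eq: "AE w in PM. liminf (\<lambda>n. u n w) = ennreal ((Xf k N w - Yf k N w)\<^sup>2)"
  proof (rule AE_mp[OF lim], intro AE_I2 impI)
    fix w assume "(\<lambda>n. S n w) \<longlonglongrightarrow> Yf k N w"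
    then have "(\<lambda>n. u n w) \<longlonglongrightarrow> ennreal ((S 0 w - Yf k N w)\<^sup>2)"
      unfolding u_def by (intro tendsto_ennrealI tendsto_intros)
    then show "liminf (\<lambda>n. u n w) = ennreal ((Xf k N w - Yf k N w)\<^sup>2)"
      using S0 by (simp add: lim_imp_Liminf)
  qed
  have "(\<integral>\<^sup>+ w. ennreal ((Xf k N w - Yf k N w)\<^sup>2) \<partial>PM) = (\<integral>\<^sup>+ w. liminf (\<lambda>n. u n w) \<partial>PM)"
    by (rule nn_integral_cong_AE) (use liminf_eq in \<open>auto elim!: AE_mp\<close>)
  also have "\<dots> \<le> liminf (\<lambda>n. \<integral>\<^sup>+ w. u n w \<partial>PM)"
    by (rule nn_integral_liminf[OF umeas])
  also have "\<dots> \<le> liminf (\<lambda>n. ennreal (1 / real N))"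
  proof (rule Liminf_mono, rule always_eventually, rule allI)
    fix n
    have "(\<integral>\<^sup>+ w. u n w \<partial>PM) = ennreal (\<integral>w. (S 0 w - S n w)\<^sup>2 \<partial>PM)"
      unfolding u_def by (rule nn_integral_eq_integral[OF sqS]) simp
    also have "\<dots> \<le> ennreal (1 / real N)" by (rule ennreal_leI[OF bnd])
    finally show "(\<integral>\<^sup>+ w. u n w \<partial>PM) \<le> ennreal (1 / real N)" .
  qed
  also have "\<dots> = ennreal (1 / real N)" by (simp add: Liminf_const)
  also have "\<dots> \<le> ennreal (3 / real N)" by (rule ennreal_leI) (simp add: divide_right_mono)
  finally show ?thesis unfolding yule_space_Pr .
qed



end
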